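(* Let $T \ge 2$ and let $R_0, \ldots, R_{T-1}$ be real matrices with $R_t \in \mathbb R^{q_t \times n}$, such that the row space of $R_t$ contains the row space of $R_{t+1}$ for $t = 0, \ldots, T-2$. For vectors $\sigma_{t+1|0} \in \mathbb R^{q_{t+1}}$, $t = 0, \ldots, T-2$, define $\sigma_{t|1} := (R_t')^+ R_{t+1}' \sigma_{t+1|0}$ for $t = 0,\ldots,T-2$ and $$\pi_6 := \frac14 \sum_{t=0}^{T-2} \big(|\sigma_{t+1|0}|^2 - |\sigma_{t|1}|^2\big).$$ Then $\pi_6 \ge 0$ for all $\sigma_{1|0}, \ldots, \sigma_{T-1|0}$ if and only if $\|R_{t+1} R_t^+\| \le 1$ for $t = 0, \ldots, T-2$.
   Context: For a matrix $M$, $M'$ is its transpose, $M^+$ its Moore–Penrose pseudoinverse, and $\|M\|$ its maximum singular value. $|\cdot|$ is the Euclidean norm. *)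

theory Defs
  imports "Jordan_Normal_Form.Matrix"
begin

definition row_space :: "real mat \<Rightarrow> real vec set" where
  "row_space A = {transpose_mat A *\<^sub>v y | y. y \<in> carrier_vec (dim_row A)}"

definition pinv :: "real mat \<Rightarrow> real mat" where
  "pinv A = (THE X. X \<in> carrier_mat (dim_col A) (dim_row A) \<and>
                   A * X * A = A \<and> X * A * X = X \<and>
                   transpose_mat (A * X) = A * X \<and> transpose_mat (X * A) = X * A)"

definition vnorm :: "real vec \<Rightarrow> real" where
  "vnorm v = sqrt (v \<bullet> v)"

definition spec_norm :: "real mat \<Rightarrow> real" where
  "spec_norm A = Sup {vnorm (A *\<^sub>v v) | v. v \<in> carrier_vec (dim_col A) \<and> vnorm v \<le> 1}"

end

theory Submission
  imports Defs
begin

definition outer :: "real vec \<Rightarrow> real vec \<Rightarrow> real mat" where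
  "outer u w = mat (dim_vec u) (dim_vec w) (\<lambda>(i,j). u $ i * w $ j)"

lemma outer_carrier[simp]: "outer u w \<in> carrier_mat (dim_vec u) (dim_vec w)"
  unfolding outer_def by auto

lemma outer_mult_vec:
  assumes "v \<in> carrier_vec (dim_vec w)"
  shows "outer u w *\<^sub>v v = (w \<bullet> v) \<cdot>\<^sub>v u"
proof (rule eq_vecI)
  fix i assume i: "i < dim_vec ((w \<bullet> v) \<cdot>\<^sub>v u)"
  have "row (outer u w) i \<bullet> v = (\<Sum>j\<in>{0..<dim_vec v}. u $ i * w $ j * v $ j)"
    using i assms unfolding scalar_prod_def outer_def by (auto intro: sum.cong)
  also have "\<dots> = u $ i * (w \<bullet> v)"
    unfolding scalar_prod_def using assms by (simp add: sum_distrib_left mult.assoc)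
  finally show "(outer u w *\<^sub>v v) $ i = ((w \<bullet> v) \<cdot>\<^sub>v u) $ i"
    using i by (simp add: outer_def)
qed (simp add: outer_def)

lemma mat_eq_by_vec:
  fixes A B :: "real mat"
  assumes A: "A \<in> carrier_mat m n" and B: "B \<in> carrier_mat m n"
    and h: "\<And>v. v \<in> carrier_vec n \<Longrightarrow> A *\<^sub>v v = B *\<^sub>v v"
  shows "A = B"
proof (rule eq_matI)
  fix i j assume i: "i < dim_row B" and j: "j < dim_col B"
  have "A $$ (i,j) = (A *\<^sub>v unit_vec n j) $ i" using A B i j by simp
  also have "\<dots> = (B *\<^sub>v unit_vec n j) $ i" using h[of "unit_vec n j"] by simp
  also have "\<dots> = B $$ (i,j)" using B i j by simp
  finally show "A $$ (i,j) = B $$ (i,j)" .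
qed (use A B in auto)

lemma sp_transpose:
  fixes A :: "real mat"
  assumes "A \<in> carrier_mat m n" "x \<in> carrier_vec n" "y \<in> carrier_vec m"
  shows "y \<bullet> (A *\<^sub>v x) = (transpose_mat A *\<^sub>v y) \<bullet> x"
  using transpose_vec_mult_scalar[OF assms] by simp

lemma smult_mat_vec:
  fixes B :: "real mat"
  assumes "v \<in> carrier_vec (dim_col B)"
  shows "(s \<cdot>\<^sub>m B) *\<^sub>v v = s \<cdot>\<^sub>v (B *\<^sub>v v)"
  using assms by (intro eq_vecI) (auto simp: scalar_prod_def sum_distrib_left mult.assoc)

lemma upd_action:
  fixes A :: "real mat"
  assumes A: "A \<in> carrier_mat (dim_vec u) (dim_vec w)" and v: "v \<in> carrier_vec (dim_vec w)"
  shows "(A + s \<cdot>\<^sub>m outer u w) *\<^sub>v v = A *\<^sub>v v + (s * (w \<bullet> v)) \<cdot>\<^sub>v u"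
proof -
  have "(A + s \<cdot>\<^sub>m outer u w) *\<^sub>v v = A *\<^sub>v v + (s \<cdot>\<^sub>m outer u w) *\<^sub>v v"
    using A v by (intro add_mult_distrib_mat_vec) auto
  also have "(s \<cdot>\<^sub>m outer u w) *\<^sub>v v = s \<cdot>\<^sub>v (outer u w *\<^sub>v v)"
    by (rule smult_mat_vec) (use v in \<open>simp add: outer_def\<close>)
  also have "\<dots> = (s * (w \<bullet> v)) \<cdot>\<^sub>v u"
    using v by (simp add: outer_mult_vec smult_smult_assoc)
  finally show ?thesis .
qed

lemma sp_self_ge0: "(v::real vec) \<bullet> v \<ge> 0"
  unfolding scalar_prod_def by (auto intro: sum_nonneg)

lemma sp_self_eq0:
  assumes "(v::real vec) \<bullet> v = 0" shows "v = 0\<^sub>v (dim_vec v)"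
proof (rule eq_vecI)
  fix i assume i: "i < dim_vec (0\<^sub>v (dim_vec v))"
  have "\<forall>j\<in>{0..<dim_vec v}. v $ j * v $ j = 0"
    using assms unfolding scalar_prod_def by (subst sum_nonneg_eq_0_iff[symmetric]) auto
  with i show "v $ i = 0\<^sub>v (dim_vec v) $ i" by auto
qed simp

lemma mat_unit_col:
  fixes A :: "real mat"
  assumes "A \<in> carrier_mat m n" "k < n"
  shows "A *\<^sub>v unit_vec n k = col A k"
  using assms by (intro eq_vecI) auto

lemma smult_zero_vec'[simp]: "t \<cdot>\<^sub>v (0\<^sub>v m :: real vec) = 0\<^sub>v m"
  by (intro eq_vecI) auto

lemma zero_smult_vec'[simp]: "(0::real) \<cdot>\<^sub>v v = 0\<^sub>v (dim_vec v)"
  by (intro eq_vecI) auto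

lemma proj_aux:
  fixes A :: "real mat"
  assumes A: "A \<in> carrier_mat m n"
  shows "k \<le> n \<Longrightarrow> \<exists>P Z. P \<in> carrier_mat m m \<and> Z \<in> carrier_mat n m \<and> transpose_mat P = P \<and>
     P * P = P \<and> (\<forall>j<k. P *\<^sub>v col A j = col A j) \<and> P = A * Z"
proof (induction k)
  case 0
  show ?case
    by (rule exI[of _ "0\<^sub>m m m"], rule exI[of _ "0\<^sub>m n m"]) (use A in \<open>auto intro!: eq_matI\<close>)
next
  case (Suc k)
  then obtain P Z where P: "P \<in> carrier_mat m m" and Z: "Z \<in> carrier_mat n m"
    and Ps: "transpose_mat P = P" and Pi: "P * P = P" and Pc: "\<forall>j<k. P *\<^sub>v col A j = col A j"
    and PA: "P = A * Z" by auto
  have kn: "k < n" using Suc by simp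
  define a where "a = col A k"
  have a: "a \<in> carrier_vec m" using A kn by (simp add: a_def)
  define c where "c = a - P *\<^sub>v a"
  have c: "c \<in> carrier_vec m" using a P by (simp add: c_def)
  have Pv: "P *\<^sub>v (P *\<^sub>v v) = P *\<^sub>v v" if "v \<in> carrier_vec m" for v
    by (metis Pi assoc_mult_mat_vec[OF P P that])
  have Pc0: "P *\<^sub>v c = 0\<^sub>v m"
    unfolding c_def using P a Pv[OF a] by (subst mult_minus_distrib_mat_vec[OF P]) auto
  have cP: "c \<bullet> (P *\<^sub>v v) = 0" if v: "v \<in> carrier_vec m" for v
  proof -
    have "c \<bullet> (P *\<^sub>v v) = (transpose_mat P *\<^sub>v c) \<bullet> v" using sp_transpose[OF P v c] .
    also have "\<dots> = 0" using Ps Pc0 v by simp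
    finally show ?thesis .
  qed
  have aPc: "P *\<^sub>v a + c = a" using a P by (intro eq_vecI) (auto simp: c_def)
  show ?case
  proof (cases "c = 0\<^sub>v m")
    case True
    have "P *\<^sub>v a + 0\<^sub>v m = P *\<^sub>v a" using P a by (intro right_zero_vec) simp
    then have Pa: "P *\<^sub>v a = a" using aPc True by simp
    have "\<forall>j<Suc k. P *\<^sub>v col A j = col A j"
    proof (intro allI impI)
      fix j assume "j < Suc k"
      then consider "j < k" | "j = k" by linarith
      then show "P *\<^sub>v col A j = col A j" using Pc Pa unfolding a_def by cases auto
    qed
    then show ?thesis using P Z Ps Pi PA by blast
  next
    case False
    define \<kappa> where "\<kappa> = c \<bullet> c"
    have "c \<bullet> c \<noteq> 0"
    proof
      assume "c \<bullet> c = 0"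
      then have "c = 0\<^sub>v (dim_vec c)" by (rule sp_self_eq0)
      then show False using False c by simp
    qed
    then have \<kappa>: "\<kappa> > 0" using sp_self_ge0[of c] unfolding \<kappa>_def by linarith
    define u where "u = unit_vec n k - Z *\<^sub>v a"
    have u: "u \<in> carrier_vec n" using Z a by (simp add: u_def)
    define P' where "P' = P + (1/\<kappa>) \<cdot>\<^sub>m outer c c"
    define Z' where "Z' = Z + (1/\<kappa>) \<cdot>\<^sub>m outer u c"
    have dc: "dim_vec c = m" using c by simp
    have du: "dim_vec u = n" using u by simp
    have occ: "outer c c \<in> carrier_mat m m" using outer_carrier[of c c] dc by simp
    have ouc: "outer u c \<in> carrier_mat n m" using outer_carrier[of u c] dc du by simp
    have P': "P' \<in> carrier_mat m m" using P occ by (simp add: P'_def)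
    have Z': "Z' \<in> carrier_mat n m" using Z ouc by (simp add: Z'_def)
    have P'v: "P' *\<^sub>v v = P *\<^sub>v v + ((1/\<kappa>) * (c \<bullet> v)) \<cdot>\<^sub>v c" if "v \<in> carrier_vec m" for v
      unfolding P'_def using upd_action[of P c c v] P that dc by simp
    have Z'v: "Z' *\<^sub>v v = Z *\<^sub>v v + ((1/\<kappa>) * (c \<bullet> v)) \<cdot>\<^sub>v u" if "v \<in> carrier_vec m" for v
      unfolding Z'_def using upd_action[of Z u c v] Z that dc du by simp
    have Au: "A *\<^sub>v u = c"
    proof -
      have "A *\<^sub>v u = A *\<^sub>v unit_vec n k - A *\<^sub>v (Z *\<^sub>v a)"
        unfolding u_def using A Z a by (subst mult_minus_distrib_mat_vec[OF A]) auto
      also have "A *\<^sub>v (Z *\<^sub>v a) = P *\<^sub>v a" using PA A Z a by simp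
      finally show ?thesis using mat_unit_col[OF A kn] by (simp add: a_def c_def)
    qed
    have PAZ: "P' = A * Z'"
    proof (rule mat_eq_by_vec[OF P'])
      show "A * Z' \<in> carrier_mat m m" using A Z' by simp
      fix v :: "real vec" assume v: "v \<in> carrier_vec m"
      have "(A * Z') *\<^sub>v v = A *\<^sub>v (Z' *\<^sub>v v)" using A Z' v by simp
      also have "\<dots> = A *\<^sub>v (Z *\<^sub>v v) + A *\<^sub>v (((1/\<kappa>) * (c \<bullet> v)) \<cdot>\<^sub>v u)"
        using Z'v[OF v] A Z v u by (simp add: mult_add_distrib_mat_vec[OF A])
      also have "\<dots> = P *\<^sub>v v + ((1/\<kappa>) * (c \<bullet> v)) \<cdot>\<^sub>v c"
        using PA A Z v u Au by (simp add: mult_mat_vec[OF A u])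
      finally show "P' *\<^sub>v v = (A * Z') *\<^sub>v v" using P'v[OF v] by simp
    qed
    have P'sym: "transpose_mat P' = P'"
    proof (rule eq_matI)
      fix i j assume ij: "i < dim_row P'" "j < dim_col P'"
      have "P $$ (j,i) = P $$ (i,j)"
        using ij P' P Ps by (metis carrier_matD index_transpose_mat(1))
      then show "transpose_mat P' $$ (i,j) = P' $$ (i,j)"
        using ij P' P dc by (simp add: P'_def outer_def)
    qed (use P' in auto)
    have P'idem: "P' * P' = P'"
    proof (rule mat_eq_by_vec)
      show "P' * P' \<in> carrier_mat m m" using P' by simp
      show "P' \<in> carrier_mat m m" by (rule P')
      fix v :: "real vec" assume v: "v \<in> carrier_vec m"
      define t where "t = (1/\<kappa>) * (c \<bullet> v)"
      define w where "w = P *\<^sub>v v + t \<cdot>\<^sub>v c"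
      have w: "w \<in> carrier_vec m" using P v c by (simp add: w_def)
      have Pw: "P *\<^sub>v w = P *\<^sub>v v"
        unfolding w_def using P v c Pv[OF v] Pc0
        by (simp add: mult_add_distrib_mat_vec[OF P] mult_mat_vec[OF P c])
      have cw: "c \<bullet> w = t * \<kappa>"
        unfolding w_def using P v c cP[OF v]
        by (simp add: scalar_prod_add_distrib[of _ m] \<kappa>_def)
      have "(P' * P') *\<^sub>v v = P' *\<^sub>v w" using P' v P'v[OF v] by (simp add: w_def t_def)
      also have "\<dots> = P *\<^sub>v v + t \<cdot>\<^sub>v c" using P'v[OF w] Pw cw \<kappa> by simp
      finally show "(P' * P') *\<^sub>v v = P' *\<^sub>v v" using P'v[OF v] by (simp add: t_def)
    qed
    have P'cols: "\<forall>j<Suc k. P' *\<^sub>v col A j = col A j"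
    proof (intro allI impI)
      fix j assume j: "j < Suc k"
      show "P' *\<^sub>v col A j = col A j"
      proof (cases "j = k")
        case True
        have "c \<bullet> a = c \<bullet> (P *\<^sub>v a + c)" using aPc by simp
        also have "\<dots> = c \<bullet> (P *\<^sub>v a) + c \<bullet> c"
          using c P a by (simp add: scalar_prod_add_distrib[of _ m])
        finally have ca: "c \<bullet> a = \<kappa>" using cP[OF a] by (simp add: \<kappa>_def)
        have "P' *\<^sub>v a = P *\<^sub>v a + c" using P'v[OF a] ca \<kappa> by simp
        then show ?thesis using True aPc by (simp add: a_def)
      next
        case False
        then have jk: "j < k" using j by simp
        have "j < n" using jk kn by simp
        then have cj: "col A j \<in> carrier_vec m" using A by simp
        have "c \<bullet> col A j = 0" using cP[OF cj] Pc jk by simp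
        then show ?thesis using P'v[OF cj] Pc jk cj dc by simp
      qed
    qed
    show ?thesis using P' Z' P'sym P'idem P'cols PAZ by blast
  qed
qed

lemma proj_exists:
  fixes A :: "real mat"
  assumes A: "A \<in> carrier_mat m n"
  shows "\<exists>P Z. P \<in> carrier_mat m m \<and> Z \<in> carrier_mat n m \<and> transpose_mat P = P \<and>
     P * P = P \<and> P * A = A \<and> P = A * Z"
proof -
  obtain P Z where P: "P \<in> carrier_mat m m" and Z: "Z \<in> carrier_mat n m"
    and h: "transpose_mat P = P" "P * P = P" "\<forall>j<n. P *\<^sub>v col A j = col A j" "P = A * Z"
    using proj_aux[OF A, of n] by auto
  have "P * A = A"
  proof (rule eq_matI)
    fix i j assume ij: "i < dim_row A" "j < dim_col A"
    have "(P * A) $$ (i,j) = (P *\<^sub>v col A j) $ i" using ij P A by simp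
    also have "\<dots> = A $$ (i,j)" using h(3) ij A by simp
    finally show "(P * A) $$ (i,j) = A $$ (i,j)" .
  qed (use P A in auto)
  then show ?thesis using P Z h by blast
qed

definition penrose :: "real mat \<Rightarrow> real mat \<Rightarrow> bool" where
  "penrose A X \<longleftrightarrow> X \<in> carrier_mat (dim_col A) (dim_row A) \<and>
                   A * X * A = A \<and> X * A * X = X \<and>
                   transpose_mat (A * X) = A * X \<and> transpose_mat (X * A) = X * A"

lemma penroseD:
  assumes "penrose A X"
  shows "X \<in> carrier_mat (dim_col A) (dim_row A)" "A * X * A = A" "X * A * X = X"
    "transpose_mat (A * X) = A * X" "transpose_mat (X * A) = X * A"
  using assms unfolding penrose_def by blast+

lemma penroseI:
  assumes "X \<in> carrier_mat (dim_col A) (dim_row A)" "A * X * A = A" "X * A * X = X"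
    "transpose_mat (A * X) = A * X" "transpose_mat (X * A) = X * A"
  shows "penrose A X"
  using assms unfolding penrose_def by blast

lemma pinv_eq_the: "pinv A = (THE X. penrose A X)"
  unfolding pinv_def penrose_def ..

lemma tr3:
  fixes A B C :: "real mat"
  assumes "A \<in> carrier_mat a b" "B \<in> carrier_mat b c" "C \<in> carrier_mat c d"
  shows "transpose_mat (A * B * C) = transpose_mat C * (transpose_mat B * transpose_mat A)"
proof -
  have "transpose_mat (A * B * C) = transpose_mat C * transpose_mat (A * B)"
    by (rule transpose_mult[of "A * B" a c]) (use assms in simp_all)
  also have "transpose_mat (A * B) = transpose_mat B * transpose_mat A"
    by (rule transpose_mult[of A a b]) (use assms in simp_all)
  finally show ?thesis .
qed

lemma penrose_exists:
  fixes A :: "real mat"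
  assumes A: "A \<in> carrier_mat m n"
  shows "\<exists>X. penrose A X"
proof -
  obtain P Z where P: "P \<in> carrier_mat m m" and Z: "Z \<in> carrier_mat n m"
    and Ps: "transpose_mat P = P" and Pi: "P * P = P" and PA: "P * A = A" and PAZ: "P = A * Z"
    using proj_exists[OF A] by blast
  have At: "transpose_mat A \<in> carrier_mat n m" using A by simp
  obtain Q W where Q: "Q \<in> carrier_mat n n" and W: "W \<in> carrier_mat m n"
    and Qs: "transpose_mat Q = Q" and Qi: "Q * Q = Q" and QA: "Q * transpose_mat A = transpose_mat A"
    and QAW: "Q = transpose_mat A * W"
    using proj_exists[OF At] by blast
  have AQ: "A * Q = A"
  proof -
    have "transpose_mat (Q * transpose_mat A) = A * Q"
      using transpose_mult[OF Q At] Qs by simp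
    then show ?thesis using QA by simp
  qed
  have QWA: "Q = transpose_mat W * A"
  proof -
    have "transpose_mat Q = transpose_mat W * A"
      using transpose_mult[OF At W] QAW by simp
    then show ?thesis using Qs by simp
  qed
  have Wt: "transpose_mat W \<in> carrier_mat n m" using W by simp
  define X where "X = Q * (Z * P)"
  have X: "X \<in> carrier_mat n m" using Q Z P by (simp add: X_def)
  have AX: "A * X = P"
  proof -
    have "A * X = (A * Q) * (Z * P)" unfolding X_def
      using assoc_mult_mat[OF A Q, of "Z * P" m] Z P by simp
    also have "\<dots> = (A * Z) * P" using AQ A Z P by (simp add: assoc_mult_mat[OF A Z P])
    also have "\<dots> = P" using PAZ Pi by simp
    finally show ?thesis .
  qed
  have XA: "X * A = Q"
  proof -
    have "X * A = Q * ((Z * P) * A)" unfolding X_def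
      using assoc_mult_mat[OF Q _ A, of "Z * P"] Z P by simp
    also have "(Z * P) * A = Z * A" using assoc_mult_mat[OF Z P A] PA by simp
    also have "Q * (Z * A) = transpose_mat W * ((A * Z) * A)"
      using QWA assoc_mult_mat[OF Wt A, of "Z * A" n] assoc_mult_mat[OF A Z A] A Z by simp
    also have "\<dots> = Q" using PAZ[symmetric] PA QWA by simp
    finally show ?thesis .
  qed
  have "A * X * A = A" using AX PA by simp
  moreover have "X * A * X = X"
  proof -
    have "X * A * X = Q * (Q * (Z * P))" using XA by (simp add: X_def)
    also have "\<dots> = (Q * Q) * (Z * P)" using assoc_mult_mat[OF Q Q, of "Z * P" m] Z P by simp
    finally show ?thesis using Qi by (simp add: X_def)
  qed
  ultimately have "penrose A X"
    unfolding penrose_def using X A AX XA Ps Qs by simp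
  then show ?thesis ..
qed

lemma penrose_unique:
  assumes X: "penrose A X" and Y: "penrose A Y"
  shows "X = Y"
proof -
  define m where "m = dim_row A"
  define n where "n = dim_col A"
  have A: "A \<in> carrier_mat m n" unfolding m_def n_def by (rule carrier_matI) (rule refl)+
  have Xc: "X \<in> carrier_mat n m" using penroseD(1)[OF X] unfolding m_def n_def .
  have Yc: "Y \<in> carrier_mat n m" using penroseD(1)[OF Y] unfolding m_def n_def .
  note XX = penroseD[OF X] and YY = penroseD[OF Y]
  have At: "transpose_mat A \<in> carrier_mat n m" using A by simp
  have Xt: "transpose_mat X \<in> carrier_mat m n" using Xc by simp
  have Yt: "transpose_mat Y \<in> carrier_mat m n" using Yc by simp
  have tA: "transpose_mat A = transpose_mat A * (transpose_mat Y * transpose_mat A)"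
    using tr3[OF A Yc A] YY by simp
  have AXt: "A * X = transpose_mat X * transpose_mat A"
    using XX transpose_mult[OF A Xc] by simp
  have AYt: "A * Y = transpose_mat Y * transpose_mat A"
    using YY transpose_mult[OF A Yc] by simp
  have XAt: "X * A = transpose_mat A * transpose_mat X"
    using XX transpose_mult[OF Xc A] by simp
  have YAt: "Y * A = transpose_mat A * transpose_mat Y"
    using YY transpose_mult[OF Yc A] by simp
  have a: "A * X = A * Y"
  proof -
    have "A * X = transpose_mat X * (transpose_mat A * (transpose_mat Y * transpose_mat A))"
      using AXt by (subst (asm) tA) assumption
    also have "\<dots> = (transpose_mat X * transpose_mat A) * (transpose_mat Y * transpose_mat A)"
      using assoc_mult_mat[OF Xt At, of "transpose_mat Y * transpose_mat A" m] Yt At by simp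
    also have "\<dots> = (A * X) * (A * Y)" using AXt AYt by simp
    also have "\<dots> = ((A * X) * A) * Y" using assoc_mult_mat[OF _ A Yc, of "A * X" m] A Xc by simp
    also have "\<dots> = A * Y" using XX by simp
    finally show ?thesis .
  qed
  have b: "X * A = Y * A"
  proof -
    have "X * A = (transpose_mat A * (transpose_mat Y * transpose_mat A)) * transpose_mat X"
      using XAt by (subst (asm) tA) assumption
    also have "\<dots> = ((transpose_mat A * transpose_mat Y) * transpose_mat A) * transpose_mat X"
      using assoc_mult_mat[OF At Yt At] by simp
    also have "\<dots> = (transpose_mat A * transpose_mat Y) * (transpose_mat A * transpose_mat X)"
      by (rule assoc_mult_mat[OF mult_carrier_mat[OF At Yt] At Xt])
    also have "\<dots> = (Y * A) * (X * A)" using XAt YAt by simp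
    also have "\<dots> = Y * ((A * X) * A)"
      using assoc_mult_mat[OF Yc A, of "X * A" n] assoc_mult_mat[OF A Xc A] A Xc by simp
    also have "\<dots> = Y * A" using XX by simp
    finally show ?thesis .
  qed
  have "X = (X * A) * X" using XX by simp
  also have "\<dots> = X * (A * X)" using assoc_mult_mat[OF Xc A Xc] .
  also have "\<dots> = X * (A * Y)" using a by simp
  also have "\<dots> = (X * A) * Y" using assoc_mult_mat[OF Xc A Yc] by simp
  also have "\<dots> = (Y * A) * Y" using b by simp
  also have "\<dots> = Y" using YY by simp
  finally show ?thesis .
qed

lemma pinv_penrose: "penrose A (pinv A)"
proof -
  have "A \<in> carrier_mat (dim_row A) (dim_col A)" by (rule carrier_matI) (rule refl)+
  from penrose_exists[OF this] obtain X where "penrose A X" ..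
  note hX = this
  show ?thesis unfolding pinv_eq_the
  proof (rule theI)
    show "penrose A X" by (rule hX)
    fix Y assume "penrose A Y" then show "Y = X" using hX by (rule penrose_unique)
  qed
qed

lemma penrose_transpose:
  assumes X: "penrose A X"
  shows "penrose (transpose_mat A) (transpose_mat X)"
proof -
  define m where "m = dim_row A"
  define n where "n = dim_col A"
  have A: "A \<in> carrier_mat m n" unfolding m_def n_def by (rule carrier_matI) (rule refl)+
  have Xc: "X \<in> carrier_mat n m" using penroseD(1)[OF X] unfolding m_def n_def .
  note X1 = penroseD(2)[OF X] and X2 = penroseD(3)[OF X] and X3 = penroseD(4)[OF X]
    and X4 = penroseD(5)[OF X]
  have At: "transpose_mat A \<in> carrier_mat n m" using A by simp
  have Xt: "transpose_mat X \<in> carrier_mat m n" using Xc by simp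
  have 1: "transpose_mat A * transpose_mat X = X * A"
    using trans[OF transpose_mult[OF Xc A, symmetric] X4] .
  have 2: "transpose_mat X * transpose_mat A = A * X"
    using trans[OF transpose_mult[OF A Xc, symmetric] X3] .
  have 3: "transpose_mat A * transpose_mat X * transpose_mat A = transpose_mat A"
  proof -
    have "transpose_mat A * transpose_mat X * transpose_mat A = transpose_mat A * (transpose_mat X * transpose_mat A)"
      by (rule assoc_mult_mat[OF At Xt At])
    also have "\<dots> = transpose_mat (A * X * A)" by (rule tr3[OF A Xc A, symmetric])
    also have "\<dots> = transpose_mat A" unfolding X1 ..
    finally show ?thesis .
  qed
  have 4: "transpose_mat X * transpose_mat A * transpose_mat X = transpose_mat X"
  proof -
    have "transpose_mat X * transpose_mat A * transpose_mat X = transpose_mat X * (transpose_mat A * transpose_mat X)"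
      by (rule assoc_mult_mat[OF Xt At Xt])
    also have "\<dots> = transpose_mat (X * A * X)" by (rule tr3[OF Xc A Xc, symmetric])
    also have "\<dots> = transpose_mat X" unfolding X2 ..
    finally show ?thesis .
  qed
  have 5: "transpose_mat X \<in> carrier_mat (dim_col (transpose_mat A)) (dim_row (transpose_mat A))"
    using Xt A by simp
  have 6: "transpose_mat (transpose_mat A * transpose_mat X) = transpose_mat A * transpose_mat X"
    unfolding 1 by (rule X4)
  have 7: "transpose_mat (transpose_mat X * transpose_mat A) = transpose_mat X * transpose_mat A"
    unfolding 2 by (rule X3)
  show ?thesis by (rule penroseI[OF 5 3 4 6 7])
qed

lemma pinv_transpose: "pinv (transpose_mat A) = transpose_mat (pinv A)"
  using penrose_unique[OF pinv_penrose penrose_transpose[OF pinv_penrose]] .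

lemma pinv_carrier: "pinv A \<in> carrier_mat (dim_col A) (dim_row A)"
  using penroseD(1)[OF pinv_penrose[of A]] .

lemma CS_sum:
  fixes a b :: "nat \<Rightarrow> real"
  shows "(\<Sum>i\<in>I. a i * b i)\<^sup>2 \<le> (\<Sum>i\<in>I. (a i)\<^sup>2) * (\<Sum>i\<in>I. (b i)\<^sup>2)"
proof (cases "(\<Sum>i\<in>I. (b i)\<^sup>2) > 0")
  case False
  then have B0: "(\<Sum>i\<in>I. (b i)\<^sup>2) = 0" using sum_nonneg[of I "\<lambda>i. (b i)\<^sup>2"] by force
  show ?thesis
  proof (cases "finite I")
    case True
    then have "\<forall>i\<in>I. (b i)\<^sup>2 = 0" using B0 sum_nonneg_eq_0_iff[of I "\<lambda>i. (b i)\<^sup>2"] by simp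
    then have "\<forall>i\<in>I. a i * b i = 0" by simp
    then have "(\<Sum>i\<in>I. a i * b i) = 0" by (intro sum.neutral) blast
    then show ?thesis using B0 by simp
  next
    case False
    then show ?thesis by simp
  qed
next
  case True
  define B where "B = (\<Sum>i\<in>I. (b i)\<^sup>2)"
  define C where "C = (\<Sum>i\<in>I. a i * b i)"
  define Aa where "Aa = (\<Sum>i\<in>I. (a i)\<^sup>2)"
  define r where "r = C / B"
  have Bp: "B > 0" using True by (simp add: B_def)
  have "0 \<le> (\<Sum>i\<in>I. (a i - r * b i)\<^sup>2)"
    by (rule sum_nonneg) simp
  also have "(\<Sum>i\<in>I. (a i - r * b i)\<^sup>2) = (\<Sum>i\<in>I. (a i)\<^sup>2 - 2 * r * (a i * b i) + r\<^sup>2 * (b i)\<^sup>2)"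
    by (rule sum.cong) (simp_all add: power2_eq_square algebra_simps)
  also have "\<dots> = Aa - 2 * r * C + r\<^sup>2 * B"
    by (simp add: sum.distrib sum_subtractf sum_distrib_left B_def C_def Aa_def)
  also have "r\<^sup>2 * B = C * C / B" using Bp by (simp add: r_def power2_eq_square)
  also have "2 * r * C = 2 * (C * C / B)" by (simp add: r_def)
  finally have "C * C / B \<le> Aa" by simp
  then have "C * C \<le> Aa * B" using Bp by (simp add: divide_le_eq)
  then show ?thesis by (simp add: B_def C_def Aa_def power2_eq_square)
qed

lemma sp_CS:
  fixes x y :: "real vec"
  assumes "dim_vec x = dim_vec y"
  shows "x \<bullet> y \<le> vnorm x * vnorm y"
proof -
  have "(x \<bullet> y)\<^sup>2 \<le> (x \<bullet> x) * (y \<bullet> y)"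
    using CS_sum[of "\<lambda>i. x $ i" "\<lambda>i. y $ i" "{0..<dim_vec y}"] assms
    unfolding scalar_prod_def by (simp add: power2_eq_square)
  then have "sqrt ((x \<bullet> y)\<^sup>2) \<le> sqrt ((x \<bullet> x) * (y \<bullet> y))" by (rule real_sqrt_le_mono)
  then have "\<bar>x \<bullet> y\<bar> \<le> vnorm x * vnorm y" unfolding vnorm_def by (simp add: real_sqrt_mult)
  then show ?thesis by simp
qed

lemma vnorm_ge0: "vnorm v \<ge> 0"
  unfolding vnorm_def using sp_self_ge0 by simp

lemma vnorm_sq: "(vnorm v)\<^sup>2 = v \<bullet> v"
  unfolding vnorm_def using sp_self_ge0 by simp

lemma vnorm_smult: "vnorm (c \<cdot>\<^sub>v v) = \<bar>c\<bar> * vnorm v"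
proof -
  have "(c \<cdot>\<^sub>v v) \<bullet> (c \<cdot>\<^sub>v v) = c\<^sup>2 * (v \<bullet> v)"
    unfolding scalar_prod_def by (simp add: sum_distrib_left power2_eq_square mult_ac)
  then show ?thesis unfolding vnorm_def by (simp add: real_sqrt_mult)
qed

lemma vnorm_zero_iff:
  assumes "vnorm v = 0" shows "v = 0\<^sub>v (dim_vec v)"
  using assms sp_self_ge0[of v] unfolding vnorm_def by (intro sp_self_eq0) simp

lemma mat_vec_zero: "A *\<^sub>v 0\<^sub>v (dim_col A) = (0\<^sub>v (dim_row A) :: real vec)"
  by (intro eq_vecI) (auto simp: scalar_prod_def)

lemma vnorm_zero[simp]: "vnorm (0\<^sub>v k) = 0"
  unfolding vnorm_def scalar_prod_def by simp

lemma vnorm_uminus[simp]: "vnorm (- v) = vnorm v"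
  unfolding vnorm_def scalar_prod_def by simp

lemma mat_vec_bound:
  fixes M :: "real mat"
  assumes M: "M \<in> carrier_mat a b" and v: "v \<in> carrier_vec b"
  shows "vnorm (M *\<^sub>v v) \<le> sqrt (\<Sum>i<a. row M i \<bullet> row M i) * vnorm v"
proof -
  have "(M *\<^sub>v v) \<bullet> (M *\<^sub>v v) = (\<Sum>i\<in>{0..<a}. (row M i \<bullet> v)\<^sup>2)"
    using M unfolding scalar_prod_def[of "M *\<^sub>v v"] by (simp add: power2_eq_square)
  also have "\<dots> \<le> (\<Sum>i\<in>{0..<a}. (row M i \<bullet> row M i) * (v \<bullet> v))"
  proof (rule sum_mono)
    fix i assume i: "i \<in> {0..<a}"
    have "row M i \<bullet> v \<le> vnorm (row M i) * vnorm v" using sp_CS[of "row M i" v] M v by simp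
    moreover have "- (row M i \<bullet> v) \<le> vnorm (row M i) * vnorm v"
      using sp_CS[of "row M i" "- v"] M v by simp
    ultimately have "\<bar>row M i \<bullet> v\<bar> \<le> vnorm (row M i) * vnorm v" by simp
    then have "\<bar>row M i \<bullet> v\<bar>\<^sup>2 \<le> (vnorm (row M i) * vnorm v)\<^sup>2"
      by (rule power_mono) simp
    then show "(row M i \<bullet> v)\<^sup>2 \<le> (row M i \<bullet> row M i) * (v \<bullet> v)"
      by (simp add: power_mult_distrib vnorm_sq)
  qed
  also have "\<dots> = (\<Sum>i<a. row M i \<bullet> row M i) * (vnorm v)\<^sup>2"
    by (simp add: sum_distrib_right vnorm_sq atLeast0LessThan)
  finally have "(vnorm (M *\<^sub>v v))\<^sup>2 \<le> (\<Sum>i<a. row M i \<bullet> row M i) * (vnorm v)\<^sup>2"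
    by (simp add: vnorm_sq)
  then have "sqrt ((vnorm (M *\<^sub>v v))\<^sup>2) \<le> sqrt ((\<Sum>i<a. row M i \<bullet> row M i) * (vnorm v)\<^sup>2)"
    by (rule real_sqrt_le_mono)
  then show ?thesis using vnorm_ge0[of v] vnorm_ge0[of "M *\<^sub>v v"] by (simp add: real_sqrt_mult)
qed

lemma spec_norm_le1_iff:
  fixes M :: "real mat"
  assumes M: "M \<in> carrier_mat a b"
  shows "spec_norm M \<le> 1 \<longleftrightarrow> (\<forall>v\<in>carrier_vec b. vnorm (M *\<^sub>v v) \<le> vnorm v)"
proof -
  define S where "S = {vnorm (M *\<^sub>v v) | v. v \<in> carrier_vec (dim_col M) \<and> vnorm v \<le> 1}"
  have sn: "spec_norm M = Sup S" unfolding spec_norm_def S_def ..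
  have dc: "dim_col M = b" using M by simp
  define K where "K = sqrt (\<Sum>i<a. row M i \<bullet> row M i)"
  have K0: "K \<ge> 0" unfolding K_def using sp_self_ge0 by (simp add: sum_nonneg)
  have Sne: "S \<noteq> {}"
  proof -
    have "vnorm (M *\<^sub>v 0\<^sub>v b) \<in> S" unfolding S_def using dc by auto
    then show ?thesis by auto
  qed
  have Sbdd: "bdd_above S"
  proof (rule bdd_aboveI)
    fix x assume "x \<in> S"
    then obtain v where v: "v \<in> carrier_vec b" "vnorm v \<le> 1" and x: "x = vnorm (M *\<^sub>v v)"
      unfolding S_def dc by auto
    have "x \<le> K * vnorm v" using mat_vec_bound[OF M v(1)] x by (simp add: K_def)
    also have "\<dots> \<le> K * 1" using mult_left_mono[OF v(2) K0] .
    finally show "x \<le> K" by simp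
  qed
  show ?thesis
  proof
    assume le: "spec_norm M \<le> 1"
    show "\<forall>v\<in>carrier_vec b. vnorm (M *\<^sub>v v) \<le> vnorm v"
    proof
      fix v :: "real vec" assume v: "v \<in> carrier_vec b"
      show "vnorm (M *\<^sub>v v) \<le> vnorm v"
      proof (cases "vnorm v = 0")
        case True
        then have "v = 0\<^sub>v b" using vnorm_zero_iff[OF True] v by simp
        then have "M *\<^sub>v v = 0\<^sub>v a" using mat_vec_zero[of M] M by simp
        then show ?thesis using True by simp
      next
        case False
        then have vp: "vnorm v > 0" using vnorm_ge0[of v] by simp
        define c where "c = 1 / vnorm v"
        have c0: "c > 0" using vp by (simp add: c_def)
        have w: "c \<cdot>\<^sub>v v \<in> carrier_vec b" using v by simp
        have "vnorm (c \<cdot>\<^sub>v v) = 1" using vp c0 by (simp add: vnorm_smult c_def)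
        then have "vnorm (M *\<^sub>v (c \<cdot>\<^sub>v v)) \<in> S" unfolding S_def using w dc by auto
        then have "vnorm (M *\<^sub>v (c \<cdot>\<^sub>v v)) \<le> Sup S" using Sbdd by (rule cSup_upper)
        also have "\<dots> \<le> 1" using le sn by simp
        finally have "c * vnorm (M *\<^sub>v v) \<le> 1"
          using mult_mat_vec[OF M v] c0 by (simp add: vnorm_smult)
        then show ?thesis using vp by (simp add: c_def divide_le_eq)
      qed
    qed
  next
    assume H: "\<forall>v\<in>carrier_vec b. vnorm (M *\<^sub>v v) \<le> vnorm v"
    have "Sup S \<le> 1"
    proof (rule cSup_least[OF Sne])
      fix x assume "x \<in> S"
      then obtain v where v: "v \<in> carrier_vec b" "vnorm v \<le> 1" and x: "x = vnorm (M *\<^sub>v v)"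
        unfolding S_def dc by auto
      show "x \<le> 1" using H v x by force
    qed
    then show "spec_norm M \<le> 1" using sn by simp
  qed
qed

lemma dual_contraction:
  fixes M :: "real mat"
  assumes M: "M \<in> carrier_mat a b"
    and H: "\<forall>v\<in>carrier_vec b. vnorm (M *\<^sub>v v) \<le> vnorm v"
    and s: "s \<in> carrier_vec a"
  shows "vnorm (transpose_mat M *\<^sub>v s) \<le> vnorm s"
proof -
  define w where "w = transpose_mat M *\<^sub>v s"
  have w: "w \<in> carrier_vec b" using M s by (simp add: w_def)
  have "(vnorm w)\<^sup>2 = w \<bullet> w" by (rule vnorm_sq)
  also have "\<dots> = s \<bullet> (M *\<^sub>v w)" unfolding w_def
    by (rule transpose_vec_mult_scalar[OF M _ s]) (use w in \<open>simp add: w_def\<close>)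
  also have "\<dots> \<le> vnorm s * vnorm (M *\<^sub>v w)" using s M by (intro sp_CS) simp
  also have "\<dots> \<le> vnorm s * vnorm w" using H w vnorm_ge0[of s] by (simp add: mult_left_mono)
  finally have sq: "(vnorm w)\<^sup>2 \<le> vnorm s * vnorm w" .
  show ?thesis
  proof (cases "vnorm w = 0")
    case True then show ?thesis using vnorm_ge0[of s] by (simp add: w_def)
  next
    case False
    then have "vnorm w > 0" using vnorm_ge0[of w] by simp
    then have "vnorm w \<le> vnorm s" using sq by (simp add: power2_eq_square)
    then show ?thesis by (simp add: w_def)
  qed
qed

lemma contraction_iff:
  fixes M :: "real mat"
  assumes M: "M \<in> carrier_mat a b"
  shows "spec_norm M \<le> 1 \<longleftrightarrow> (\<forall>s\<in>carrier_vec a. vnorm (transpose_mat M *\<^sub>v s) \<le> vnorm s)"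
proof
  assume "spec_norm M \<le> 1"
  then have H: "\<forall>v\<in>carrier_vec b. vnorm (M *\<^sub>v v) \<le> vnorm v" using spec_norm_le1_iff[OF M] by simp
  show "\<forall>s\<in>carrier_vec a. vnorm (transpose_mat M *\<^sub>v s) \<le> vnorm s"
    using dual_contraction[OF M H] by blast
next
  assume H: "\<forall>s\<in>carrier_vec a. vnorm (transpose_mat M *\<^sub>v s) \<le> vnorm s"
  have Mt: "transpose_mat M \<in> carrier_mat b a" using M by simp
  have "\<forall>v\<in>carrier_vec b. vnorm (M *\<^sub>v v) \<le> vnorm v"
    using dual_contraction[OF Mt H] by simp
  then show "spec_norm M \<le> 1" using spec_norm_le1_iff[OF M] by simp
qed

theorem proposition3:
  fixes T n :: nat and q :: "nat \<Rightarrow> nat" and R :: "nat \<Rightarrow> real mat"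
  assumes "T \<ge> 2"
    and "\<And>t. t < T \<Longrightarrow> R t \<in> carrier_mat (q t) n"
    and "\<And>t. t + 2 \<le> T \<Longrightarrow> row_space (R (t + 1)) \<subseteq> row_space (R t)"
  shows "(\<forall>\<sigma> :: nat \<Rightarrow> real vec.
            (\<forall>t. t + 2 \<le> T \<longrightarrow> \<sigma> (t + 1) \<in> carrier_vec (q (t + 1))) \<longrightarrow>
            0 \<le> 1 / 4 * (\<Sum>t < T - 1.
                 (vnorm (\<sigma> (t + 1)))\<^sup>2
                 - (vnorm (pinv (transpose_mat (R t)) * transpose_mat (R (t + 1)) *\<^sub>v \<sigma> (t + 1)))\<^sup>2))
         \<longleftrightarrow> (\<forall>t. t + 2 \<le> T \<longrightarrow> spec_norm (R (t + 1) * pinv (R t)) \<le> 1)"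
proof -
  note Rc = assms(2)
  define M where "M t = R (t + 1) * pinv (R t)" for t
  have Mc: "M t \<in> carrier_mat (q (t + 1)) (q t)" if t: "t + 2 \<le> T" for t
  proof -
    have R1: "R (t + 1) \<in> carrier_mat (q (t + 1)) n" using Rc t by simp
    have R0: "R t \<in> carrier_mat (q t) n" using Rc t by simp
    have "pinv (R t) \<in> carrier_mat n (q t)" using pinv_carrier[of "R t"] R0 by simp
    then show ?thesis using R1 by (simp add: M_def)
  qed
  have key: "pinv (transpose_mat (R t)) * transpose_mat (R (t + 1)) = transpose_mat (M t)"
    if t: "t + 2 \<le> T" for t
  proof -
    have R1: "R (t + 1) \<in> carrier_mat (q (t + 1)) n" using Rc t by simp
    have R0: "R t \<in> carrier_mat (q t) n" using Rc t by simp
    have P: "pinv (R t) \<in> carrier_mat n (q t)" using pinv_carrier[of "R t"] R0 by simp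
    show ?thesis unfolding pinv_transpose M_def using transpose_mult[OF R1 P] by simp
  qed
  have Mtc: "transpose_mat (M t) \<in> carrier_mat (q t) (q (t + 1))" if t: "t + 2 \<le> T" for t
    using Mc[OF t] by simp
  have rhs: "(\<forall>t. t + 2 \<le> T \<longrightarrow> spec_norm (R (t + 1) * pinv (R t)) \<le> 1) \<longleftrightarrow>
      (\<forall>t. t + 2 \<le> T \<longrightarrow> (\<forall>s\<in>carrier_vec (q (t + 1)). vnorm (transpose_mat (M t) *\<^sub>v s) \<le> vnorm s))"
    using contraction_iff[OF Mc] unfolding M_def by blast
  define G where "G \<sigma> t = (vnorm (\<sigma> (t + 1)))\<^sup>2
                 - (vnorm (pinv (transpose_mat (R t)) * transpose_mat (R (t + 1)) *\<^sub>v \<sigma> (t + 1)))\<^sup>2"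
    for \<sigma> :: "nat \<Rightarrow> real vec" and t
  have G_eq: "G \<sigma> t = (vnorm (\<sigma> (t + 1)))\<^sup>2 - (vnorm (transpose_mat (M t) *\<^sub>v \<sigma> (t + 1)))\<^sup>2"
    if t: "t + 2 \<le> T" for \<sigma> t
    unfolding G_def key[OF t] ..
  have lhs: "(\<forall>\<sigma> :: nat \<Rightarrow> real vec.
            (\<forall>t. t + 2 \<le> T \<longrightarrow> \<sigma> (t + 1) \<in> carrier_vec (q (t + 1))) \<longrightarrow>
            0 \<le> 1 / 4 * (\<Sum>t < T - 1. G \<sigma> t)) \<longleftrightarrow>
      (\<forall>t. t + 2 \<le> T \<longrightarrow> (\<forall>s\<in>carrier_vec (q (t + 1)). vnorm (transpose_mat (M t) *\<^sub>v s) \<le> vnorm s))"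
  proof
    assume H: "\<forall>\<sigma> :: nat \<Rightarrow> real vec.
            (\<forall>t. t + 2 \<le> T \<longrightarrow> \<sigma> (t + 1) \<in> carrier_vec (q (t + 1))) \<longrightarrow>
            0 \<le> 1 / 4 * (\<Sum>t < T - 1. G \<sigma> t)"
    show "\<forall>t. t + 2 \<le> T \<longrightarrow> (\<forall>s\<in>carrier_vec (q (t + 1)). vnorm (transpose_mat (M t) *\<^sub>v s) \<le> vnorm s)"
    proof (intro allI impI ballI)
      fix t0 and s0 :: "real vec" assume t0: "t0 + 2 \<le> T" and s0: "s0 \<in> carrier_vec (q (t0 + 1))"
      define \<sigma> where "\<sigma> k = (if k = t0 + 1 then s0 else 0\<^sub>v (q k))" for k
      have \<sigma>c: "\<forall>t. t + 2 \<le> T \<longrightarrow> \<sigma> (t + 1) \<in> carrier_vec (q (t + 1))"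
        using s0 by (auto simp: \<sigma>_def)
      have "(\<Sum>t < T - 1. G \<sigma> t) = (\<Sum>t < T - 1. if t = t0 then G \<sigma> t0 else 0)"
      proof (rule sum.cong)
        fix t assume "t \<in> {..<T - 1}"
        then have t: "t + 2 \<le> T" by auto
        show "G \<sigma> t = (if t = t0 then G \<sigma> t0 else 0)"
        proof (cases "t = t0")
          case False
          then have st: "\<sigma> (t + 1) = 0\<^sub>v (q (t + 1))" by (simp add: \<sigma>_def)
          have "transpose_mat (M t) *\<^sub>v 0\<^sub>v (q (t + 1)) = 0\<^sub>v (q t)"
            using mat_vec_zero[of "transpose_mat (M t)"] Mtc[OF t] by simp
          then show ?thesis using False G_eq[OF t, of \<sigma>] st by simp
        qed simp
      qed simp
      also have "\<dots> = G \<sigma> t0" using t0 by (simp add: sum.delta)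
      finally have "0 \<le> G \<sigma> t0" using H \<sigma>c by fastforce
      then have "(vnorm (transpose_mat (M t0) *\<^sub>v s0))\<^sup>2 \<le> (vnorm s0)\<^sup>2"
        using G_eq[OF t0, of \<sigma>] by (simp add: \<sigma>_def)
      then show "vnorm (transpose_mat (M t0) *\<^sub>v s0) \<le> vnorm s0"
        using vnorm_ge0[of s0] by (rule power2_le_imp_le)
    qed
  next
    assume C: "\<forall>t. t + 2 \<le> T \<longrightarrow> (\<forall>s\<in>carrier_vec (q (t + 1)). vnorm (transpose_mat (M t) *\<^sub>v s) \<le> vnorm s)"
    show "\<forall>\<sigma> :: nat \<Rightarrow> real vec.
            (\<forall>t. t + 2 \<le> T \<longrightarrow> \<sigma> (t + 1) \<in> carrier_vec (q (t + 1))) \<longrightarrow>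
            0 \<le> 1 / 4 * (\<Sum>t < T - 1. G \<sigma> t)"
    proof (intro allI impI)
      fix \<sigma> :: "nat \<Rightarrow> real vec"
      assume \<sigma>c: "\<forall>t. t + 2 \<le> T \<longrightarrow> \<sigma> (t + 1) \<in> carrier_vec (q (t + 1))"
      have "0 \<le> (\<Sum>t < T - 1. G \<sigma> t)"
      proof (rule sum_nonneg)
        fix t assume "t \<in> {..<T - 1}"
        then have t: "t + 2 \<le> T" by auto
        have "vnorm (transpose_mat (M t) *\<^sub>v \<sigma> (t + 1)) \<le> vnorm (\<sigma> (t + 1))"
          using C t \<sigma>c by blast
        then have "(vnorm (transpose_mat (M t) *\<^sub>v \<sigma> (t + 1)))\<^sup>2 \<le> (vnorm (\<sigma> (t + 1)))\<^sup>2"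
          using vnorm_ge0 by (intro power_mono) auto
        then show "0 \<le> G \<sigma> t" using G_eq[OF t, of \<sigma>] by simp
      qed
      then show "0 \<le> 1 / 4 * (\<Sum>t < T - 1. G \<sigma> t)" by simp
    qed
  qed
  show ?thesis using lhs rhs unfolding G_def by simp
qed

end
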